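(* Let $N\ge 3$ and consider a planar "wheel" framework in $\mathbb{R}^2$: a hub vertex at $\mathbf{U}_0$ and spoke vertices at $\mathbf{U}_1,\dots,\mathbf{U}_N$ arranged in counterclockwise order around $\mathbf{U}_0$, with all indices taken modulo $N$. Its edges are the $N$ spokes $(0,i)$ and the $N$ rim edges $(i,i+1)$, $i=1,\dots,N$. Let $L_i=|\mathbf{U}_i-\mathbf{U}_0|$, $\Delta L_{i,i+1}=|\mathbf{U}_{i+1}-\mathbf{U}_i|$, and let $\alpha_{i,i+1}\in(0,\pi)$ be the planar angle at $\mathbf{U}_0$ between spokes $i$ and $i+1$, with $\sum_{i=1}^N\alpha_{i,i+1}=2\pi$. Define $$\sigma_{i,i+1}=-\csc\alpha_{i,i+1}\,\frac{\Delta L_{i,i+1}}{L_iL_{i+1}}$$ on rim edge $(i,i+1)$, and $$\sigma_i=\frac{\csc\alpha_{i,i+1}}{L_{i+1}}+\frac{\csc\alpha_{i-1,i}}{L_{i-1}}-\frac{\cot\alpha_{i,i+1}+\cot\alpha_{i-1,i}}{L_i}$$ on spoke $(0,i)$. Then this assignment $\boldsymbol{\sigma}$ is a self stress of the framework. That is, for every vertex $n\in\{0,1,\dots,N\}$, $$\sum_{m:\,(n,m)\text{ an edge}}\sigma_{(n,m)}\,\frac{\mathbf{U}_n-\mathbf{U}_m}{|\mathbf{U}_n-\mathbf{U}_m|}=\mathbf{0}.$$ Equivalently, $\boldsymbol{\sigma}^T\mathbf{C}=\mathbf{0}^T$, where $\mathbf{C}$ is the compatibility matrix whose row for edge $(n,m)$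 sends the in-plane displacements $(\mathbf{u}_1,\mathbf{u}_2,\dots)$ to $\frac{\mathbf{U}_n-\mathbf{U}_m}{|\mathbf{U}_n-\mathbf{U}_m|}\cdot(\mathbf{u}_n-\mathbf{u}_m)$.
   Context: A self stress of a bar framework is an assignment of a real number $\sigma_e$ to each edge $e$ such that force balance holds at every vertex, with the forces directed along unit edge vectors as written in the claim. The wheel arises as the star of an internal vertex of a planar triangulated crease pattern: the faces are the triangles $(\mathbf{U}_0,\mathbf{U}_i,\mathbf{U}_{i+1})$, which is why each angle lies in $(0,\pi)$. *)

theory Defs
  imports "HOL-Analysis.Analysis"
begin

text \<open>Points of the plane are vectors in real^2.  The hub is vertex 0, the spoke
vertices are 1..N; rim indices are taken cyclically (modulo N) on {1..N}.\<close>

definition wnext :: "nat \<Rightarrow> nat \<Rightarrow> nat" where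
  "wnext N i = (if i = N then 1 else i + 1)"

definition wprev :: "nat \<Rightarrow> nat \<Rightarrow> nat" where
  "wprev N i = (if i = 1 then N else i - 1)"

definition wheel_edges :: "nat \<Rightarrow> nat set set" where
  "wheel_edges N = {{0, i} | i. i \<in> {1..N}} \<union> {{i, wnext N i} | i. i \<in> {1..N}}"

definition cross2 :: "real^2 \<Rightarrow> real^2 \<Rightarrow> real" where
  "cross2 x y = x$1 * y$2 - x$2 * y$1"

definition vec_angle :: "real^2 \<Rightarrow> real^2 \<Rightarrow> real" where
  "vec_angle x y = arccos ((x \<bullet> y) / (norm x * norm y))"

definition csc :: "real \<Rightarrow> real" where
  "csc x = 1 / sin x"

definition is_self_stress ::
  "(nat \<Rightarrow> real^2) \<Rightarrow> nat set \<Rightarrow> nat set set \<Rightarrow> (nat set \<Rightarrow> real) \<Rightarrow> bool" where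
  "is_self_stress U V E \<sigma> \<longleftrightarrow>
     (\<forall>n\<in>V. (\<Sum>m\<in>{m\<in>V. {n, m} \<in> E}.
                 \<sigma> {n, m} *\<^sub>R ((1 / norm (U n - U m)) *\<^sub>R (U n - U m))) = 0)"

end

theory Submission
  imports Defs
begin

lemma inner2: "(x::real^2) \<bullet> y = x$1*y$1 + x$2*y$2"
  by (simp add: inner_vec_def sum_2)

lemma lagrange2: "((b::real^2) \<bullet> c)^2 + (cross2 b c)^2 = (b \<bullet> b) * (c \<bullet> c)"
  by (simp add: inner2 cross2_def power2_eq_square algebra_simps)

lemma angle_trig:
  fixes b c :: "real^2"
  assumes X: "cross2 b c > 0" and a: "a = vec_angle b c"
  shows "cos a = (b \<bullet> c) / (norm b * norm c)" "sin a = cross2 b c / (norm b * norm c)"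
proof -
  have bn: "b \<noteq> 0" "c \<noteq> 0" using X by (auto simp: cross2_def)
  have nb: "norm b > 0" "norm c > 0" using bn by auto
  have nn: "(norm b * norm c)^2 = (b \<bullet> b) * (c \<bullet> c)"
    by (simp add: power_mult_distrib power2_norm_eq_inner)
  define t where "t = (b \<bullet> c) / (norm b * norm c)"
  have t1: "\<bar>t\<bar> \<le> 1" unfolding t_def using Cauchy_Schwarz_ineq2[of b c] nb
    by (simp add: abs_div divide_le_eq_1)
  show c1: "cos a = t" unfolding a vec_angle_def t_def[symmetric] using t1 by (simp add: cos_arccos_abs)
  have s0: "sin a \<ge> 0" unfolding a vec_angle_def t_def[symmetric] using t1 by (simp add: sin_arccos_abs abs_square_le_1)
  have "(sin a)^2 = 1 - t^2" using sin_cos_squared_add[of a] c1 by simp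
  also have "\<dots> = (cross2 b c / (norm b * norm c))^2"
    unfolding t_def using lagrange2[of b c] nn nb
    by (simp add: power_divide field_simps)
  finally have "(sin a)^2 = (cross2 b c / (norm b * norm c))^2" .
  moreover have "cross2 b c / (norm b * norm c) \<ge> 0" using X nb by simp
  ultimately show "sin a = cross2 b c / (norm b * norm c)" using s0
    by (metis power2_eq_iff_nonneg)
qed

lemma key_real:
  fixes a1 a2 b1 b2 c1 c2 ak bk ck :: real
  assumes X: "X \<noteq> 0" and Y: "Y \<noteq> 0" and B: "B \<noteq> 0"
    and XX: "X = b1*c2 - b2*c1" and YY: "Y = a1*b2 - a2*b1" and BB: "B = b1*b1+b2*b2"
    and k: "(ak = a1 \<and> bk = b1 \<and> ck = c1) \<or> (ak = a2 \<and> bk = b2 \<and> ck = c2)"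
  shows "(1 / X + 1 / Y - ((b1*c1+b2*c2) / X + (a1*b1+a2*b2) / Y) / B) * bk
     - (1 / X) * (bk - ck) + (1 / Y) * (ak - bk) = 0"
proof -
  have e: "(1 / X + 1 / Y - ((b1*c1+b2*c2) / X + (a1*b1+a2*b2) / Y) / B) * bk
     - (1 / X) * (bk - ck) + (1 / Y) * (ak - bk)
     = (B*Y*ck + B*X*ak - ((b1*c1+b2*c2)*Y + (a1*b1+a2*b2)*X)*bk) / (X*Y*B)"
    using X Y B by (simp add: field_simps)
  have "B*Y*ck + B*X*ak - ((b1*c1+b2*c2)*Y + (a1*b1+a2*b2)*X)*bk = 0"
    using k unfolding XX YY BB by (auto simp: algebra_simps)
  then show ?thesis using e by simp
qed

lemma key_identity:
  fixes a b c :: "real^2"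
  assumes X: "cross2 b c \<noteq> 0" and Y: "cross2 a b \<noteq> 0" and B: "b \<bullet> b \<noteq> 0"
  shows "(1 / cross2 b c + 1 / cross2 a b - ((b \<bullet> c) / cross2 b c + (a \<bullet> b) / cross2 a b) / (b \<bullet> b)) *\<^sub>R b
     - (1 / cross2 b c) *\<^sub>R (b - c) + (1 / cross2 a b) *\<^sub>R (a - b) = 0"
proof -
  have X': "b$1*c$2 - b$2*c$1 \<noteq> 0" and Y': "a$1*b$2 - a$2*b$1 \<noteq> 0" and B': "b$1*b$1+b$2*b$2 \<noteq> 0"
    using X Y B by (auto simp: inner2 cross2_def)
  note k = key_real[OF X' Y' B' refl refl refl]
  have 1: "(1 / (b$1*c$2 - b$2*c$1) + 1 / (a$1*b$2 - a$2*b$1) - ((b$1*c$1+b$2*c$2) / (b$1*c$2 - b$2*c$1) + (a$1*b$1+a$2*b$2) / (a$1*b$2 - a$2*b$1)) / (b$1*b$1+b$2*b$2)) * b$1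
     - (1 / (b$1*c$2 - b$2*c$1)) * (b$1 - c$1) + (1 / (a$1*b$2 - a$2*b$1)) * (a$1 - b$1) = 0"
    by (rule k) simp
  have 2: "(1 / (b$1*c$2 - b$2*c$1) + 1 / (a$1*b$2 - a$2*b$1) - ((b$1*c$1+b$2*c$2) / (b$1*c$2 - b$2*c$1) + (a$1*b$1+a$2*b$2) / (a$1*b$2 - a$2*b$1)) / (b$1*b$1+b$2*b$2)) * b$2
     - (1 / (b$1*c$2 - b$2*c$1)) * (b$2 - c$2) + (1 / (a$1*b$2 - a$2*b$1)) * (a$2 - b$2) = 0"
    by (rule k) simp
  show ?thesis unfolding vec_eq_iff forall_2 inner2 cross2_def
    using 1 2 by simp
qed
lemma wn_range: "N \<ge> 1 \<Longrightarrow> i \<in> {1..N} \<Longrightarrow> wnext N i \<in> {1..N}"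
  by (auto simp: wnext_def)
lemma wp_range: "N \<ge> 1 \<Longrightarrow> i \<in> {1..N} \<Longrightarrow> wprev N i \<in> {1..N}"
  by (auto simp: wprev_def)
lemma wn_wp: "N \<ge> 1 \<Longrightarrow> i \<in> {1..N} \<Longrightarrow> wnext N (wprev N i) = i"
  by (auto simp: wnext_def wprev_def)
lemma wp_wn: "N \<ge> 1 \<Longrightarrow> i \<in> {1..N} \<Longrightarrow> wprev N (wnext N i) = i"
  by (auto simp: wnext_def wprev_def)
lemma wn_ne: "N \<ge> 3 \<Longrightarrow> i \<in> {1..N} \<Longrightarrow> wnext N i \<noteq> i"
  by (auto simp: wnext_def)
lemma wp_ne: "N \<ge> 3 \<Longrightarrow> i \<in> {1..N} \<Longrightarrow> wprev N i \<noteq> i"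
  by (auto simp: wprev_def)
lemma wn_wp_ne: "N \<ge> 3 \<Longrightarrow> i \<in> {1..N} \<Longrightarrow> wnext N i \<noteq> wprev N i"
  by (auto simp: wnext_def wprev_def)

lemma nbr_spoke:
  assumes N: "N \<ge> 3" and i: "i \<in> {1..N}"
  shows "{m\<in>{0..N}. {i, m} \<in> wheel_edges N} = {0, wnext N i, wprev N i}"
proof -
  have A: "wheel_edges N = {{0, j} | j. j \<in> {1..N}} \<union> {{j, wnext N j} | j. j \<in> {1..N}}"
    by (rule wheel_edges_def)
  have E: "{i, m} \<in> wheel_edges N \<longleftrightarrow> m = 0 \<or> m = wnext N i \<or> m = wprev N i" for m
  proof
    assume "{i, m} \<in> wheel_edges N"
    then obtain j where j: "j \<in> {1..N}" and "{i,m} = {0,j} \<or> {i,m} = {j, wnext N j}"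
      unfolding A by blast
    then have "(i = 0 \<and> m = j) \<or> (i = j \<and> m = 0) \<or> (i = j \<and> m = wnext N j) \<or> (i = wnext N j \<and> m = j)"
      unfolding doubleton_eq_iff by blast
    moreover have "i \<noteq> 0" using i by simp
    moreover have "i = wnext N j \<Longrightarrow> j = wprev N i" using wp_wn[of N j] j N by simp
    ultimately show "m = 0 \<or> m = wnext N i \<or> m = wprev N i" by blast
  next
    assume m: "m = 0 \<or> m = wnext N i \<or> m = wprev N i"
    have p: "wprev N i \<in> {1..N}" using wp_range[of N i] N i by simp
    have e1: "{i, 0} \<in> wheel_edges N" unfolding A using i by blast
    have e2: "{i, wnext N i} \<in> wheel_edges N" unfolding A using i by blast
    have "{wprev N i, wnext N (wprev N i)} \<in> wheel_edges N" unfolding A using p by blast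
    then have e3: "{i, wprev N i} \<in> wheel_edges N"
      using wn_wp[of N i] N i by (simp add: insert_commute)
    show "{i, m} \<in> wheel_edges N" using m e1 e2 e3 by blast
  qed
  have B: "wnext N i \<le> N" "wprev N i \<le> N" using wn_range[of N i] wp_range[of N i] N i by auto
  show ?thesis
  proof (rule set_eqI)
    fix m
    have "m \<in> {m\<in>{0..N}. {i, m} \<in> wheel_edges N} \<longleftrightarrow> m \<le> N \<and> (m = 0 \<or> m = wnext N i \<or> m = wprev N i)"
      using E[of m] by simp
    also have "\<dots> \<longleftrightarrow> (m = 0 \<or> m = wnext N i \<or> m = wprev N i)" using B by auto
    also have "\<dots> \<longleftrightarrow> m \<in> {0, wnext N i, wprev N i}" by simp
    finally show "m \<in> {m\<in>{0..N}. {i, m} \<in> wheel_edges N} \<longleftrightarrow> m \<in> {0, wnext N i, wprev N i}" .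
  qed
qed

lemma nbr_hub:
  assumes N: "N \<ge> 3"
  shows "{m\<in>{0..N}. {0, m} \<in> wheel_edges N} = {1..N}"
proof -
  have A: "wheel_edges N = {{0, j} | j. j \<in> {1..N}} \<union> {{j, wnext N j} | j. j \<in> {1..N}}"
    by (rule wheel_edges_def)
  have E: "{0, m} \<in> wheel_edges N \<longleftrightarrow> m \<in> {1..N}" for m
  proof
    assume "{0, m} \<in> wheel_edges N"
    then obtain j where j: "j \<in> {1..N}" and o: "{0,m} = {0,j} \<or> {0,m} = {j, wnext N j}"
      unfolding A by blast
    have w: "wnext N j \<noteq> 0" using wn_range[of N j] N j by simp
    have j0: "j \<noteq> 0" using j by simp
    from o have "m = j" unfolding doubleton_eq_iff using w j0 by blast
    then show "m \<in> {1..N}" using j by simp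
  next
    assume "m \<in> {1..N}" then show "{0, m} \<in> wheel_edges N" unfolding A by blast
  qed
  show ?thesis
  proof (rule set_eqI)
    fix m
    show "m \<in> {m\<in>{0..N}. {0, m} \<in> wheel_edges N} \<longleftrightarrow> m \<in> {1..N}"
      using E[of m] by auto
  qed
qed
theorem mainTheorem1:
  fixes N :: nat and U :: "nat \<Rightarrow> real^2" and \<sigma> :: "nat set \<Rightarrow> real"
    and L :: "nat \<Rightarrow> real" and DL :: "nat \<Rightarrow> real" and \<alpha> :: "nat \<Rightarrow> real"
  assumes N: "N \<ge> 3"
    and spokes_nonzero: "\<forall>i\<in>{1..N}. U i \<noteq> U 0"
    and ccw: "\<forall>i\<in>{1..N}. cross2 (U i - U 0) (U (wnext N i) - U 0) > 0"
    and L_def: "\<forall>i\<in>{1..N}. L i = norm (U i - U 0)"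
    and DL_def: "\<forall>i\<in>{1..N}. DL i = norm (U (wnext N i) - U i)"
    and alpha_def: "\<forall>i\<in>{1..N}. \<alpha> i = vec_angle (U i - U 0) (U (wnext N i) - U 0)"
    and alpha_range: "\<forall>i\<in>{1..N}. 0 < \<alpha> i \<and> \<alpha> i < pi"
    and alpha_sum: "(\<Sum>i=1..N. \<alpha> i) = 2 * pi"
    and rim: "\<forall>i\<in>{1..N}. \<sigma> {i, wnext N i} = - csc (\<alpha> i) * DL i / (L i * L (wnext N i))"
    and spoke: "\<forall>i\<in>{1..N}. \<sigma> {0, i} =
         csc (\<alpha> i) / L (wnext N i) + csc (\<alpha> (wprev N i)) / L (wprev N i)
         - (cot (\<alpha> i) + cot (\<alpha> (wprev N i))) / L i"
  shows "is_self_stress U {0..N} (wheel_edges N) \<sigma>"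
  proof -
  have N1: "N \<ge> 1" using N by simp
  define u where "u i = U i - U 0" for i
  define nx where "nx i = wnext N i" for i
  define pv where "pv i = wprev N i" for i
  define X where "X i = cross2 (u i) (u (nx i))" for i
  define d where "d i = u i \<bullet> u (nx i)" for i
  define G where "G n m = \<sigma> {n, m} *\<^sub>R ((1 / norm (U n - U m)) *\<^sub>R (U n - U m))" for n m
  have Gsym: "G n m = - G m n" for n m
    unfolding G_def by (simp add: insert_commute norm_minus_commute flip: scaleR_minus_right)
  have nxr: "nx i \<in> {1..N}" and pvr: "pv i \<in> {1..N}" and nxpv: "nx (pv i) = i"
    and pvnx: "pv (nx i) = i" if "i \<in> {1..N}" for i
    using that N1 wn_range wp_range wn_wp wp_wn unfolding nx_def pv_def by auto
  have Xpos: "X i > 0" if "i \<in> {1..N}" for i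
    using ccw that unfolding X_def u_def nx_def by auto
  have Lpos: "L i > 0" and Lu: "L i = norm (u i)" if "i \<in> {1..N}" for i
    using spokes_nonzero L_def that unfolding u_def by auto
  have sinA: "sin (\<alpha> i) = X i / (L i * L (nx i))" and cosA: "cos (\<alpha> i) = d i / (L i * L (nx i))"
    if i: "i \<in> {1..N}" for i
  proof -
    have a: "\<alpha> i = vec_angle (u i) (u (nx i))" using alpha_def i unfolding u_def nx_def by auto
    show "sin (\<alpha> i) = X i / (L i * L (nx i))" using angle_trig(2)[OF _ a] Xpos[OF i]
      Lu[OF i] Lu[OF nxr[OF i]] unfolding X_def by simp
    show "cos (\<alpha> i) = d i / (L i * L (nx i))" using angle_trig(1)[OF _ a] Xpos[OF i]
      Lu[OF i] Lu[OF nxr[OF i]] unfolding X_def d_def by simp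
  qed
  have cscA: "csc (\<alpha> i) = L i * L (nx i) / X i" and cotA: "cot (\<alpha> i) = d i / X i"
    if i: "i \<in> {1..N}" for i
    using sinA[OF i] cosA[OF i] Lpos[OF i] Lpos[OF nxr[OF i]] Xpos[OF i]
    by (auto simp: csc_def cot_def)
  have DLpos: "DL i > 0" and DLn: "DL i = norm (U i - U (nx i))" if i: "i \<in> {1..N}" for i
  proof -
    show "DL i = norm (U i - U (nx i))" using DL_def i unfolding nx_def by (simp add: norm_minus_commute)
    have "U i \<noteq> U (nx i)"
    proof
      assume "U i = U (nx i)"
      then have "X i = 0" unfolding X_def u_def by (simp add: cross2_def)
      then show False using Xpos[OF i] by simp
    qed
    then show "DL i > 0" using \<open>DL i = norm (U i - U (nx i))\<close> by simp
  qed
  have Gnx: "G i (nx i) = - (1 / X i) *\<^sub>R (u i - u (nx i))" if i: "i \<in> {1..N}" for i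
  proof -
    have s: "\<sigma> {i, nx i} = - DL i / X i"
      using rim i cscA[OF i] Lpos[OF i] Lpos[OF nxr[OF i]] unfolding nx_def by auto
    show ?thesis unfolding G_def s DLn[OF i, symmetric] using DLpos[OF i]
      by (simp add: u_def)
  qed
  have G0: "G i 0 = (1 / X i + 1 / X (pv i) - (d i / X i + d (pv i) / X (pv i)) / (u i \<bullet> u i)) *\<^sub>R u i"
    if i: "i \<in> {1..N}" for i
  proof -
    have p: "pv i \<in> {1..N}" using pvr[OF i] .
    have s: "\<sigma> {0, i} = L i / X i + L i / X (pv i) - (d i / X i + d (pv i) / X (pv i)) / L i"
      using spoke i cscA[OF i] cscA[OF p] cotA[OF i] cotA[OF p] nxpv[OF i]
        Lpos[OF i] Lpos[OF p] Lpos[OF nxr[OF i]]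
      unfolding nx_def[symmetric] pv_def[symmetric] by auto
    have uu: "u i \<bullet> u i = L i * L i" using Lu[OF i] by (simp add: dot_square_norm power2_eq_square)
    have "G i 0 = (\<sigma> {0, i} / L i) *\<^sub>R u i"
      unfolding G_def using Lu[OF i] by (simp add: insert_commute u_def)
    also have "\<sigma> {0, i} / L i = 1 / X i + 1 / X (pv i) - (d i / X i + d (pv i) / X (pv i)) / (u i \<bullet> u i)"
      unfolding s uu using Lpos[OF i] by (simp add: field_simps)
    finally show ?thesis .
  qed
  have bal: "G i 0 + G i (nx i) + G i (pv i) = 0" if i: "i \<in> {1..N}" for i
  proof -
    have p: "pv i \<in> {1..N}" using pvr[OF i] .
    have Gp: "G i (pv i) = (1 / X (pv i)) *\<^sub>R (u (pv i) - u i)"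
      using Gsym[of i "pv i"] Gnx[OF p] nxpv[OF i] by simp
    have k: "cross2 (u i) (u (nx i)) \<noteq> 0" "cross2 (u (pv i)) (u i) \<noteq> 0" "u i \<bullet> u i \<noteq> 0"
      using Xpos[OF i] Xpos[OF p] nxpv[OF i] Lpos[OF i] Lu[OF i] unfolding X_def by auto
    have Xp: "X (pv i) = cross2 (u (pv i)) (u i)" unfolding X_def using nxpv[OF i] by simp
    have dp: "d (pv i) = u (pv i) \<bullet> u i" unfolding d_def using nxpv[OF i] by simp
    show ?thesis unfolding G0[OF i] Gnx[OF i] Gp Xp dp
      using key_identity[OF k] unfolding X_def d_def by (simp add: algebra_simps)
  qed
  have bij: "bij_betw pv {1..N} {1..N}"
    by (rule bij_betw_byWitness[where f'=nx]) (use nxr pvr nxpv pvnx in auto)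
  have reidx: "(\<Sum>j\<in>{1..N}. G (pv j) (nx (pv j))) = (\<Sum>j\<in>{1..N}. G j (nx j))"
    using sum.reindex_bij_betw[OF bij, of "\<lambda>j. G j (nx j)"] .
  have hub: "(\<Sum>j\<in>{1..N}. G 0 j) = 0"
  proof -
    have "(\<Sum>j\<in>{1..N}. G 0 j) = (\<Sum>j\<in>{1..N}. G j (nx j) - G (pv j) (nx (pv j)))"
    proof (rule sum.cong[OF refl])
      fix j assume j: "j \<in> {1..N}"
      show "G 0 j = G j (nx j) - G (pv j) (nx (pv j))"
      proof -
        have a: "G 0 j = - G j 0" by (rule Gsym)
        have b: "G j (pv j) = - G (pv j) j" by (rule Gsym)
        have "G j 0 = (G j 0 + G j (nx j) + G j (pv j)) - G j (nx j) - G j (pv j)" by simp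
        also have "\<dots> = - G j (nx j) + G (pv j) j" using bal[OF j] b by simp
        finally have c: "G j 0 = - G j (nx j) + G (pv j) j" .
        show ?thesis using a c nxpv[OF j] by simp
      qed
    qed
    also have "\<dots> = 0" using reidx by (simp add: sum_subtractf)
    finally show ?thesis .
  qed
  show ?thesis unfolding is_self_stress_def
  proof
    fix n assume n: "n \<in> {0..N}"
    show "(\<Sum>m\<in>{m\<in>{0..N}. {n, m} \<in> wheel_edges N}.
            \<sigma> {n, m} *\<^sub>R ((1 / norm (U n - U m)) *\<^sub>R (U n - U m))) = 0"
    proof (cases "n = 0")
      case True
      then show ?thesis using hub nbr_hub[OF N] unfolding G_def by simp
    next
      case False
      then have i: "n \<in> {1..N}" using n by auto
      have ne: "nx n \<noteq> n" "pv n \<noteq> n" "nx n \<noteq> pv n" "nx n \<noteq> 0" "pv n \<noteq> 0"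
        using wn_ne[OF N i] wp_ne[OF N i] wn_wp_ne[OF N i] nxr[OF i] pvr[OF i]
        unfolding nx_def pv_def by auto
      have "(\<Sum>m\<in>{0, nx n, pv n}. G n m) = G n 0 + G n (nx n) + G n (pv n)"
        using ne by (simp add: add.assoc)
      then show ?thesis using bal[OF i] nbr_spoke[OF N i] unfolding G_def nx_def pv_def by simp
    qed
  qed
qed

end
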